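(* Let $\Gamma$ be a connected unbalanced unicyclic signed graph (with at least one edge) whose Laplacian eigenvalues are $\mu_1\ge\mu_2\ge\cdots\ge\mu_n>0$. Then $S(\Gamma)\times K_2$ and $S(\Gamma)\otimes K_2$ are noncospectral and equienergetic if and only if $\mu_n\ge 1$.
   Context: A signed graph $\Gamma=(G,\sigma)$ is a simple graph $G$ with a sign function $\sigma:E(G)\to\{1,-1\}$; $A(\Gamma)$ has $(i,j)$ entry $\sigma(v_iv_j)$ if $v_iv_j\in E(G)$ and $0$ otherwise, and $L(\Gamma)=D(G)-A(\Gamma)$ with $D(G)$ the diagonal degree matrix. Unbalanced means some cycle has an odd number of negative edges; unicyclic means $G$ is connected with exactly one cycle. The energy $\mathcal{E}(\Gamma)$ is the sum of absolute values of the adjacency eigenvalues; two signed graphs are equienergetic if they have equal energy, and noncospectral if their adjacency spectra differ. Signed subdivision graph $S(\Gamma)$: fix $\vartheta(v,e)\in\{1,-1\}$ for each vertex $v$ incident with edge $e$, with $\vartheta(v,e)\vartheta(w,e)=-\sigma(e)$ for every edge $e=vw$; $S(\Gamma)$ has vertex set $V(G)\cup E(G)$ and an edge $ve$ of sign $\vartheta(v,e)$ whenever $v$ is an end of $e$, and no other edges. $K_2$ denotes the single positive edge. For signed graphs $\Gamma_1=(G_1,\sigma_1)$, $\Gamma_2=(G_2,\sigma_2)$: the Cartesian product $\Gamma_1\times\Gamma_2$ has vertex set $V(G_1)\times V(G_2)$, with $(u_i,v_j)\sim(u_k,v_l)$ of sign $\sigma_1(u_iu_k)$ if $j=l$ and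 $u_iu_k\in E(G_1)$, and of sign $\sigma_2(v_jv_l)$ if $i=k$ and $v_jv_l\in E(G_2)$. The Kronecker product $\Gamma_1\otimes\Gamma_2$ has vertex set $V(G_1)\times V(G_2)$, with $(u_i,v_j)\sim(u_k,v_l)$ iff $u_iu_k\in E(G_1)$ and $v_jv_l\in E(G_2)$, of sign $\sigma_1(u_iu_k)\sigma_2(v_jv_l)$. *)

theory Defs
  imports "HOL-Computational_Algebra.Computational_Algebra" "HOL-Combinatorics.Permutations"
begin

text \<open>A signed graph is given by a finite vertex set V and a sign function
  s with s u v \<in> {-1,0,1}; u v is an edge iff s u v \<noteq> 0, and then s u v is its sign.\<close>

definition signed_graph :: "'a set \<Rightarrow> ('a \<Rightarrow> 'a \<Rightarrow> int) \<Rightarrow> bool" where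
  "signed_graph V s \<longleftrightarrow> finite V \<and> (\<forall>u v. s u v \<in> {-1, 0, 1}) \<and> (\<forall>u v. s u v = s v u)
     \<and> (\<forall>v. s v v = 0) \<and> (\<forall>u v. s u v \<noteq> 0 \<longrightarrow> u \<in> V \<and> v \<in> V)"

definition sg_edges :: "'a set \<Rightarrow> ('a \<Rightarrow> 'a \<Rightarrow> int) \<Rightarrow> 'a set set" where
  "sg_edges V s = {{u, v} | u v. u \<in> V \<and> v \<in> V \<and> s u v \<noteq> 0}"

definition sg_connected :: "'a set \<Rightarrow> ('a \<Rightarrow> 'a \<Rightarrow> int) \<Rightarrow> bool" where
  "sg_connected V s \<longleftrightarrow> V \<noteq> {} \<and>
     (\<forall>u\<in>V. \<forall>v\<in>V. (\<lambda>x y. x \<in> V \<and> y \<in> V \<and> s x y \<noteq> 0)\<^sup>*\<^sup>* u v)"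

definition is_cycle :: "'a set \<Rightarrow> ('a \<Rightarrow> 'a \<Rightarrow> int) \<Rightarrow> 'a list \<Rightarrow> bool" where
  "is_cycle V s xs \<longleftrightarrow> length xs \<ge> 3 \<and> distinct xs \<and> set xs \<subseteq> V \<and>
     (\<forall>i < length xs. s (xs ! i) (xs ! ((i + 1) mod length xs)) \<noteq> 0)"

definition cycle_edges :: "'a list \<Rightarrow> 'a set set" where
  "cycle_edges xs = {{xs ! i, xs ! ((i + 1) mod length xs)} | i. i < length xs}"

definition cycle_sign :: "('a \<Rightarrow> 'a \<Rightarrow> int) \<Rightarrow> 'a list \<Rightarrow> int" where
  "cycle_sign s xs = (\<Prod>i<length xs. s (xs ! i) (xs ! ((i + 1) mod length xs)))"

text \<open>Cycles are identified with their edge sets (so rotations/reversals of the same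
  cycle count once).\<close>

definition unicyclic :: "'a set \<Rightarrow> ('a \<Rightarrow> 'a \<Rightarrow> int) \<Rightarrow> bool" where
  "unicyclic V s \<longleftrightarrow> sg_connected V s \<and> card {cycle_edges xs | xs. is_cycle V s xs} = 1"

definition unbalanced :: "'a set \<Rightarrow> ('a \<Rightarrow> 'a \<Rightarrow> int) \<Rightarrow> bool" where
  "unbalanced V s \<longleftrightarrow> (\<exists>xs. is_cycle V s xs \<and> cycle_sign s xs = -1)"

definition det_on :: "'a set \<Rightarrow> ('a \<Rightarrow> 'a \<Rightarrow> 'b::comm_ring_1) \<Rightarrow> 'b" where
  "det_on V M = (\<Sum>p\<in>{p. p permutes V}. of_int (sign p) * (\<Prod>i\<in>V. M i (p i)))"

definition charpoly_on :: "'a set \<Rightarrow> ('a \<Rightarrow> 'a \<Rightarrow> real) \<Rightarrow> real poly" where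
  "charpoly_on V M = det_on V (\<lambda>i j. (if i = j then [:0, 1:] else 0) - [:M i j:])"

text \<open>Spectrum (eigenvalues with multiplicity) of a real symmetric matrix: the roots of
  its characteristic polynomial (all real).\<close>

definition spectrum_on :: "'a set \<Rightarrow> ('a \<Rightarrow> 'a \<Rightarrow> real) \<Rightarrow> real multiset" where
  "spectrum_on V M = proots (charpoly_on V M)"

definition adj_matrix :: "('a \<Rightarrow> 'a \<Rightarrow> int) \<Rightarrow> 'a \<Rightarrow> 'a \<Rightarrow> real" where
  "adj_matrix s i j = real_of_int (s i j)"

definition lap_matrix :: "'a set \<Rightarrow> ('a \<Rightarrow> 'a \<Rightarrow> int) \<Rightarrow> 'a \<Rightarrow> 'a \<Rightarrow> real" where
  "lap_matrix V s i j =
     (if i = j then real (card {w \<in> V. s i w \<noteq> 0}) else 0) - real_of_int (s i j)"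

definition adj_spectrum :: "'a set \<Rightarrow> ('a \<Rightarrow> 'a \<Rightarrow> int) \<Rightarrow> real multiset" where
  "adj_spectrum V s = spectrum_on V (adj_matrix s)"

definition lap_spectrum :: "'a set \<Rightarrow> ('a \<Rightarrow> 'a \<Rightarrow> int) \<Rightarrow> real multiset" where
  "lap_spectrum V s = spectrum_on V (lap_matrix V s)"

definition energy :: "'a set \<Rightarrow> ('a \<Rightarrow> 'a \<Rightarrow> int) \<Rightarrow> real" where
  "energy V s = (\<Sum>x\<in>#adj_spectrum V s. \<bar>x\<bar>)"

definition equienergetic ::
  "'a set \<Rightarrow> ('a \<Rightarrow> 'a \<Rightarrow> int) \<Rightarrow> 'b set \<Rightarrow> ('b \<Rightarrow> 'b \<Rightarrow> int) \<Rightarrow> bool" where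
  "equienergetic V1 s1 V2 s2 \<longleftrightarrow> energy V1 s1 = energy V2 s2"

definition noncospectral ::
  "'a set \<Rightarrow> ('a \<Rightarrow> 'a \<Rightarrow> int) \<Rightarrow> 'b set \<Rightarrow> ('b \<Rightarrow> 'b \<Rightarrow> int) \<Rightarrow> bool" where
  "noncospectral V1 s1 V2 s2 \<longleftrightarrow> adj_spectrum V1 s1 \<noteq> adj_spectrum V2 s2"

definition valid_subdiv_signs ::
  "'a set \<Rightarrow> ('a \<Rightarrow> 'a \<Rightarrow> int) \<Rightarrow> ('a \<Rightarrow> 'a set \<Rightarrow> int) \<Rightarrow> bool" where
  "valid_subdiv_signs V s \<theta> \<longleftrightarrow>
     (\<forall>e\<in>sg_edges V s. \<forall>v\<in>e. \<theta> v e \<in> {-1, 1}) \<and>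
     (\<forall>u\<in>V. \<forall>v\<in>V. s u v \<noteq> 0 \<longrightarrow> \<theta> u {u, v} * \<theta> v {u, v} = - s u v)"

definition subdiv_vertices :: "'a set \<Rightarrow> ('a \<Rightarrow> 'a \<Rightarrow> int) \<Rightarrow> ('a + 'a set) set" where
  "subdiv_vertices V s = Inl ` V \<union> Inr ` sg_edges V s"

fun subdiv_sign ::
  "'a set \<Rightarrow> ('a \<Rightarrow> 'a \<Rightarrow> int) \<Rightarrow> ('a \<Rightarrow> 'a set \<Rightarrow> int) \<Rightarrow> 'a + 'a set \<Rightarrow> 'a + 'a set \<Rightarrow> int" where
  "subdiv_sign V s \<theta> (Inl v) (Inr e) = (if e \<in> sg_edges V s \<and> v \<in> e then \<theta> v e else 0)"
| "subdiv_sign V s \<theta> (Inr e) (Inl v) = (if e \<in> sg_edges V s \<and> v \<in> e then \<theta> v e else 0)"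
| "subdiv_sign V s \<theta> _ _ = 0"

definition K2_vertices :: "bool set" where "K2_vertices = UNIV"

definition K2_sign :: "bool \<Rightarrow> bool \<Rightarrow> int" where
  "K2_sign a b = (if a \<noteq> b then 1 else 0)"

definition prod_vertices :: "'a set \<Rightarrow> 'b set \<Rightarrow> ('a \<times> 'b) set" where
  "prod_vertices V1 V2 = V1 \<times> V2"

definition cart_sign ::
  "('a \<Rightarrow> 'a \<Rightarrow> int) \<Rightarrow> ('b \<Rightarrow> 'b \<Rightarrow> int) \<Rightarrow> 'a \<times> 'b \<Rightarrow> 'a \<times> 'b \<Rightarrow> int" where
  "cart_sign s1 s2 x y =
     (if snd x = snd y then s1 (fst x) (fst y)
      else if fst x = fst y then s2 (snd x) (snd y) else 0)"

definition kron_sign ::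
  "('a \<Rightarrow> 'a \<Rightarrow> int) \<Rightarrow> ('b \<Rightarrow> 'b \<Rightarrow> int) \<Rightarrow> 'a \<times> 'b \<Rightarrow> 'a \<times> 'b \<Rightarrow> int" where
  "kron_sign s1 s2 x y = s1 (fst x) (fst y) * s2 (snd x) (snd y)"

end

theory Submission
  imports Defs "Jordan_Normal_Form.Char_Poly"
begin

definition GG :: "'a set \<Rightarrow> ('a \<Rightarrow> 'a \<Rightarrow> int) \<Rightarrow> bool" where
  "GG V s \<longleftrightarrow> finite V \<and> (\<forall>u v. s u v = s v u) \<and> (\<forall>v. s v v = 0) \<and> (\<forall>u v. s u v \<noteq> 0 \<longrightarrow> u \<in> V \<and> v \<in> V)"

lemma path_cycle:
  assumes G: "GG V s" and ne: "V \<noteq> {}"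
    and deg: "\<And>v. v \<in> V \<Longrightarrow> card {w\<in>V. s v w \<noteq> 0} \<ge> 2"
  shows "\<exists>xs. is_cycle V s xs"
proof -
  have fin: "finite V" and sym: "\<And>u v. s u v = s v u" and irr: "\<And>v. s v v = 0"
    and sup: "\<And>u v. s u v \<noteq> 0 \<Longrightarrow> u \<in> V \<and> v \<in> V" using G unfolding GG_def by auto
  define P where "P = {xs. distinct xs \<and> set xs \<subseteq> V \<and> xs \<noteq> [] \<and>
       (\<forall>i. Suc i < length xs \<longrightarrow> s (xs!i) (xs!Suc i) \<noteq> 0)}"
  have Pfin: "finite P"
  proof (rule finite_subset[OF _ finite_lists_length_le[OF fin, of "card V"]])
    show "P \<subseteq> {xs. set xs \<subseteq> V \<and> length xs \<le> card V}"
    proof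
      fix ys assume "ys \<in> P"
      hence "distinct ys" "set ys \<subseteq> V" unfolding P_def by auto
      thus "ys \<in> {xs. set xs \<subseteq> V \<and> length xs \<le> card V}" using distinct_card card_mono[OF fin] by (metis mem_Collect_eq)
    qed
  qed
  obtain v0 where "v0 \<in> V" using ne by auto
  hence v0P: "[v0] \<in> P" unfolding P_def by auto
  have bnd: "\<forall>ys. ys \<in> P \<longrightarrow> length ys < Suc (card V)"
  proof (intro allI impI)
    fix ys assume "ys \<in> P"
    hence "distinct ys" "set ys \<subseteq> V" unfolding P_def by auto
    hence "length ys \<le> card V" using distinct_card card_mono[OF fin] by metis
    thus "length ys < Suc (card V)" by simp
  qed
  obtain xs where xsP: "xs \<in> P" and xsmax: "\<And>ys. ys \<in> P \<Longrightarrow> length ys \<le> length xs"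
    using ex_has_greatest_nat[of "\<lambda>xs. xs \<in> P" "[v0]" length "Suc (card V)", OF v0P bnd] by blast
  have dxs: "distinct xs" and sxs: "set xs \<subseteq> V" and nxs: "xs \<noteq> []"
    and axs: "\<And>i. Suc i < length xs \<Longrightarrow> s (xs!i) (xs!Suc i) \<noteq> 0"
    using xsP unfolding P_def by auto
  define v where "v = xs!0"
  have vV: "v \<in> V" using sxs nxs unfolding v_def by (simp add: subset_iff)
  define x where "x = (if length xs \<ge> 2 then xs!1 else v)"
  have "\<exists>u\<in>{w\<in>V. s v w \<noteq> 0}. u \<noteq> x"
  proof (rule ccontr)
    assume "\<not> ?thesis"
    hence "{w\<in>V. s v w \<noteq> 0} \<subseteq> {x}" by auto
    hence "card {w\<in>V. s v w \<noteq> 0} \<le> card {x}" by (intro card_mono) auto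
    hence "card {w\<in>V. s v w \<noteq> 0} \<le> 1" by simp
    with deg[OF vV] show False by simp
  qed
  then obtain u where uV: "u \<in> V" and svu: "s v u \<noteq> 0" and ux: "u \<noteq> x" by auto
  have "u \<in> set xs"
  proof (rule ccontr)
    assume un: "u \<notin> set xs"
    have "u # xs \<in> P" unfolding P_def
    proof (intro CollectI conjI allI impI)
      fix i assume i: "Suc i < length (u # xs)"
      show "s ((u # xs) ! i) ((u # xs) ! Suc i) \<noteq> 0"
      proof (cases i)
        case 0 thus ?thesis using svu sym v_def by (metis nth_Cons_0 nth_Cons_Suc)
      next
        case (Suc k) thus ?thesis using i axs by auto
      qed
    qed (use un dxs sxs uV in auto)
    from xsmax[OF this] show False by simp
  qed
  then obtain j where j: "j < length xs" and uj: "xs ! j = u" by (auto simp: in_set_conv_nth)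
  have j0: "j \<noteq> 0"
  proof
    assume "j = 0" hence "u = v" using uj v_def by simp
    thus False using svu irr by simp
  qed
  have j1: "j \<noteq> 1"
  proof
    assume "j = 1"
    hence "length xs \<ge> 2" using j by auto
    thus False using ux uj \<open>j = 1\<close> x_def by auto
  qed
  define ys where "ys = take (Suc j) xs"
  have lys: "length ys = Suc j" using j ys_def by auto
  have "is_cycle V s ys" unfolding is_cycle_def
  proof (intro conjI allI impI)
    show "3 \<le> length ys" using lys j0 j1 by auto
    show "distinct ys" using dxs ys_def by auto
    show "set ys \<subseteq> V" using sxs ys_def set_take_subset by fastforce
    fix i assume i: "i < length ys"
    show "s (ys ! i) (ys ! ((i + 1) mod length ys)) \<noteq> 0"
    proof (cases "i = j")
      case True
      hence "(i+1) mod length ys = 0" using lys by simp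
      thus ?thesis using True uj svu sym ys_def v_def by (simp add: lys)
    next
      case False
      hence "i < j" using i lys by auto
      hence "(i+1) mod length ys = Suc i" using lys by simp
      thus ?thesis using \<open>i < j\<close> axs j ys_def by simp
    qed
  qed
  thus ?thesis by blast
qed

lemma sg_edgesI: "u \<in> V \<Longrightarrow> v \<in> V \<Longrightarrow> s u v \<noteq> 0 \<Longrightarrow> {u,v} \<in> sg_edges V s"
  unfolding sg_edges_def by blast

lemma GG_I: "finite V \<Longrightarrow> (\<And>u v. s u v = s v u) \<Longrightarrow> (\<And>v. s v v = 0) \<Longrightarrow>
   (\<And>u v. s u v \<noteq> 0 \<Longrightarrow> u \<in> V \<and> v \<in> V) \<Longrightarrow> GG V s"
  unfolding GG_def by blast

lemma is_cycle_mono: "is_cycle V' s' xs \<Longrightarrow> V' \<subseteq> V \<Longrightarrow> (\<And>u v. s' u v \<noteq> 0 \<Longrightarrow> s u v \<noteq> 0) \<Longrightarrow> is_cycle V s xs"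
  unfolding is_cycle_def by blast

lemma dense_cycle:
  assumes "GG V s" "V \<noteq> {}" "card (sg_edges V s) \<ge> card V"
  shows "\<exists>xs. is_cycle V s xs"
  using assms
proof (induction "card V" arbitrary: V s rule: less_induct)
  case less
  have fin: "finite V" and sym: "\<And>u v. s u v = s v u" and irr: "\<And>v. s v v = 0"
    and sup: "\<And>u v. s u v \<noteq> 0 \<Longrightarrow> u \<in> V \<and> v \<in> V" using less.prems unfolding GG_def by auto
  show ?case
  proof (cases "\<forall>v\<in>V. card {w\<in>V. s v w \<noteq> 0} \<ge> 2")
    case True
    thus ?thesis using path_cycle[OF less.prems(1,2)] by auto
  next
    case False
    then obtain v where vV: "v \<in> V" and dv: "card {w\<in>V. s v w \<noteq> 0} \<le> 1" by auto
    define V' where "V' = V - {v}"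
    define s' where "s' = (\<lambda>x y. if x = v \<or> y = v then 0 else s x y)"
    have "\<forall>u w. s' u w \<noteq> 0 \<longrightarrow> u \<in> V' \<and> w \<in> V'"
    proof (intro allI impI)
      fix u w assume h: "s' u w \<noteq> 0"
      hence "u \<noteq> v" "w \<noteq> v" "s u w \<noteq> 0" by (auto simp: s'_def split: if_splits)
      thus "u \<in> V' \<and> w \<in> V'" using sup[of u w] V'_def by auto
    qed
    hence G': "GG V' s'" unfolding GG_def using fin sym irr unfolding V'_def s'_def by auto
    have cV': "card V' = card V - 1" unfolding V'_def using vV fin by simp
    have sub: "sg_edges V s \<subseteq> sg_edges V' s' \<union> (\<lambda>w. {v,w}) ` {w\<in>V. s v w \<noteq> 0}"
    proof
      fix e assume "e \<in> sg_edges V s"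
      then obtain a b where e: "e = {a,b}" "a \<in> V" "b \<in> V" "s a b \<noteq> 0" unfolding sg_edges_def by auto
      show "e \<in> sg_edges V' s' \<union> (\<lambda>w. {v,w}) ` {w\<in>V. s v w \<noteq> 0}"
      proof (cases "a = v \<or> b = v")
        case True
        thus ?thesis
        proof
          assume "a = v" thus ?thesis using e by auto
        next
          assume "b = v" hence "e = {v,a}" "s v a \<noteq> 0" using e sym by auto
          thus ?thesis using e by auto
        qed
      next
        case False
        hence "e \<in> sg_edges V' s'" unfolding sg_edges_def V'_def s'_def using e by auto
        thus ?thesis by auto
      qed
    qed
    have finE': "finite (sg_edges V' s')"
    proof -
      have "sg_edges V' s' \<subseteq> Pow V'" unfolding sg_edges_def by auto
      moreover have "finite V'" using fin V'_def by auto
      ultimately show ?thesis by (meson finite_Pow_iff finite_subset)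
    qed
    have "card (sg_edges V s) \<le> card (sg_edges V' s' \<union> (\<lambda>w. {v,w}) ` {w\<in>V. s v w \<noteq> 0})"
      by (rule card_mono[OF _ sub]) (use finE' fin in auto)
    also have "\<dots> \<le> card (sg_edges V' s') + card ((\<lambda>w. {v,w}) ` {w\<in>V. s v w \<noteq> 0})"
      by (rule card_Un_le)
    also have "card ((\<lambda>w. {v,w}) ` {w\<in>V. s v w \<noteq> 0}) \<le> card {w\<in>V. s v w \<noteq> 0}"
      by (rule card_image_le) (use fin in auto)
    finally have cE: "card (sg_edges V s) \<le> card (sg_edges V' s') + 1" using dv by linarith
    have V'ne: "V' \<noteq> {}"
    proof
      assume "V' = {}"
      hence "V = {v}" using vV V'_def by auto
      hence "sg_edges V s = {}" unfolding sg_edges_def using irr by auto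
      thus False using less.prems(3) \<open>V = {v}\<close> by simp
    qed
    have "card V > 0" using vV fin by (auto simp: card_gt_0_iff)
    hence "card V' < card V" using cV' by simp
    moreover have "card (sg_edges V' s') \<ge> card V'" using cE cV' less.prems(3) by linarith
    ultimately obtain xs where xs: "is_cycle V' s' xs" using less.hyps[OF _ G' V'ne] by blast
    have "is_cycle V s xs"
      by (rule is_cycle_mono[OF xs]) (auto simp: V'_def s'_def split: if_splits)
    thus ?thesis by blast
  qed
qed

lemma unicyclic_edges_le:
  assumes "GG V s" "unicyclic V s"
  shows "card (sg_edges V s) \<le> card V"
proof (rule ccontr)
  assume "\<not> ?thesis"
  hence gt: "card (sg_edges V s) \<ge> card V + 1" by simp
  have fin: "finite V" and sym: "\<And>u v. s u v = s v u" and irr: "\<And>v. s v v = 0"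
    and sup: "\<And>u v. s u v \<noteq> 0 \<Longrightarrow> u \<in> V \<and> v \<in> V" using assms(1) unfolding GG_def by auto
  have ne: "V \<noteq> {}" using assms(2) unfolding unicyclic_def sg_connected_def by blast
  obtain xs where xs: "is_cycle V s xs" using dense_cycle[OF assms(1) ne] gt by auto
  define a where "a = xs ! 0"
  define b where "b = xs ! 1"
  have l3: "length xs \<ge> 3" using xs unfolding is_cycle_def by auto
  have "\<forall>i<length xs. s (xs ! i) (xs ! ((i + 1) mod length xs)) \<noteq> 0" using xs unfolding is_cycle_def by blast
  moreover have "0 < length xs" using l3 by linarith
  ultimately have "s (xs ! 0) (xs ! ((0 + 1) mod length xs)) \<noteq> 0" by blast
  moreover have "(0 + 1) mod length xs = 1" using l3 by simp
  ultimately have sab: "s a b \<noteq> 0" unfolding a_def b_def by simp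
  have abV: "a \<in> V" "b \<in> V" using sup[OF sab] by auto
  define s' where "s' = (\<lambda>x y. if (x = a \<and> y = b) \<or> (x = b \<and> y = a) then 0 else s x y)"
  have G': "GG V s'"
  proof (rule GG_I[OF fin])
    fix u w show "s' u w = s' w u" unfolding s'_def using sym[of u w] by auto
    show "s' w w = 0" unfolding s'_def using irr[of w] by auto
    assume h: "s' u w \<noteq> 0"
    hence "s u w \<noteq> 0" unfolding s'_def by (auto split: if_splits)
    thus "u \<in> V \<and> w \<in> V" using sup[of u w] by auto
  qed
  have sub: "sg_edges V s \<subseteq> insert {a,b} (sg_edges V s')"
  proof
    fix e assume "e \<in> sg_edges V s"
    then obtain c d where e: "e = {c,d}" "c \<in> V" "d \<in> V" "s c d \<noteq> 0" unfolding sg_edges_def by auto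
    show "e \<in> insert {a,b} (sg_edges V s')"
    proof (cases "(c = a \<and> d = b) \<or> (c = b \<and> d = a)")
      case True thus ?thesis using e by auto
    next
      case False
      hence "s' c d \<noteq> 0" unfolding s'_def using e by auto
      thus ?thesis using e sg_edgesI[of c V d s'] by auto
    qed
  qed
  have finE': "finite (sg_edges V s')"
  proof -
    have "sg_edges V s' \<subseteq> Pow V" unfolding sg_edges_def by auto
    thus ?thesis using fin by (meson finite_Pow_iff finite_subset)
  qed
  have "card (sg_edges V s) \<le> card (insert {a,b} (sg_edges V s'))"
    by (rule card_mono[OF _ sub]) (use finE' in auto)
  also have "\<dots> \<le> card (sg_edges V s') + 1" by (simp add: card_insert_if finE')
  finally have "card (sg_edges V s') \<ge> card V" using gt by linarith
  then obtain ys where ys: "is_cycle V s' ys" using dense_cycle[OF G' ne] by auto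
  have ys2: "is_cycle V s ys"
    by (rule is_cycle_mono[OF ys]) (auto simp: s'_def split: if_splits)
  have in1: "{a,b} \<in> cycle_edges xs" unfolding cycle_edges_def a_def b_def
  proof -
    have "(0 + 1) mod length xs = 1" using l3 by simp
    hence "{xs ! 0, xs ! 1} = {xs ! 0, xs ! ((0 + 1) mod length xs)}" by simp
    moreover have "(0::nat) < length xs" using l3 by linarith
    ultimately show "{xs ! 0, xs ! 1} \<in> {{xs ! i, xs ! ((i + 1) mod length xs)} |i. i < length xs}" by blast
  qed
  have in2: "{a,b} \<notin> cycle_edges ys"
  proof
    assume "{a,b} \<in> cycle_edges ys"
    then obtain i where i: "i < length ys" and eq: "{a,b} = {ys ! i, ys ! ((i + 1) mod length ys)}"
      unfolding cycle_edges_def by auto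
    have "s' (ys ! i) (ys ! ((i + 1) mod length ys)) \<noteq> 0" using ys i unfolding is_cycle_def by auto
    moreover have "(ys ! i = a \<and> ys ! ((i + 1) mod length ys) = b) \<or> (ys ! i = b \<and> ys ! ((i + 1) mod length ys) = a)"
      using eq unfolding doubleton_eq_iff by blast
    ultimately show False unfolding s'_def by presburger
  qed
  have "cycle_edges xs \<in> {cycle_edges xs | xs. is_cycle V s xs}" using xs by blast
  moreover have "cycle_edges ys \<in> {cycle_edges xs | xs. is_cycle V s xs}" using ys2 by blast
  moreover have "cycle_edges xs \<noteq> cycle_edges ys" using in1 in2 by auto
  moreover have "card {cycle_edges xs | xs. is_cycle V s xs} = 1" using assms(2) unfolding unicyclic_def by (rule conjunct2)
  ultimately show False
  proof -
    assume a1: "cycle_edges xs \<in> {cycle_edges xs | xs. is_cycle V s xs}"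
      and a2: "cycle_edges ys \<in> {cycle_edges xs | xs. is_cycle V s xs}"
      and a3: "cycle_edges xs \<noteq> cycle_edges ys"
      and a4: "card {cycle_edges xs | xs. is_cycle V s xs} = 1"
    from a4 have a5: "card {cycle_edges xs | xs. is_cycle V s xs} = Suc 0" by simp
    from card_1_singleton_iff[THEN iffD1, OF a5] obtain z where z: "{cycle_edges xs | xs. is_cycle V s xs} = {z}" by (elim exE)
    from a1 have "cycle_edges xs = z" unfolding z by (rule singletonD)
    moreover from a2 have "cycle_edges ys = z" unfolding z by (rule singletonD)
    ultimately show False using a3 by simp
  qed
qed


lemma det_on_reindex:
  fixes M :: "'a \<Rightarrow> 'a \<Rightarrow> 'b::comm_ring_1"
  assumes f: "bij_betw f {0..<k} I"
  shows "det_on I M = det (mat k k (\<lambda>(i,j). M (f i) (f j)))"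
proof -
  let ?A = "{0..<k}"
  let ?F = "\<lambda>\<pi> x. if x \<in> I then f (\<pi> (inv_into ?A f x)) else x"
  have bij: "bij_betw ?F {\<pi>. \<pi> permutes ?A} {\<pi>. \<pi> permutes I}"
    by (rule bij_betw_permutations[OF f])
  have inj: "inj_on f ?A" using f by (simp add: bij_betw_def)
  have fA: "f ` ?A = I" using f by (simp add: bij_betw_def)
  have mp: "?F p = map_permutation ?A f p" for p
    unfolding map_permutation_def restrict_id_def fA by (auto simp: fun_eq_iff)
  have "det_on I M = (\<Sum>p\<in>{p. p permutes ?A}. of_int (sign (?F p)) * (\<Prod>i\<in>I. M i (?F p i)))"
    unfolding det_on_def by (rule sum.reindex_bij_betw[OF bij, symmetric])
  also have "\<dots> = (\<Sum>p\<in>{p. p permutes ?A}. of_int (sign p) * (\<Prod>i\<in>?A. M (f i) (f (p i))))"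
  proof (rule sum.cong[OF refl])
    fix p assume "p \<in> {p. p permutes ?A}"
    hence p: "p permutes ?A" by simp
    have "sign (?F p) = sign p" unfolding mp by (rule sign_map_permutation[OF inj p]) simp
    moreover have "(\<Prod>i\<in>I. M i (?F p i)) = (\<Prod>i\<in>?A. M (f i) (?F p (f i)))"
      by (rule prod.reindex_bij_betw[OF f, symmetric])
    moreover have "?F p (f i) = f (p i)" if "i \<in> ?A" for i
      using that inj fA by auto
    ultimately show "of_int (sign (?F p)) * (\<Prod>i\<in>I. M i (?F p i)) = of_int (sign p) * (\<Prod>i\<in>?A. M (f i) (f (p i)))"
      by simp
  qed
  also have "\<dots> = det (mat k k (\<lambda>(i,j). M (f i) (f j)))"
    unfolding det_def'[of "mat k k (\<lambda>(i,j). M (f i) (f j))" k, OF mat_carrier]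
  proof (rule sum.cong[OF refl])
    fix p assume "p \<in> {p. p permutes ?A}"
    hence p: "p permutes ?A" by simp
    have "p i < k" if "i < k" for i using permutes_in_image[OF p] that by simp
    thus "of_int (sign p) * (\<Prod>i\<in>?A. M (f i) (f (p i))) = of_int (sign p) * (\<Prod>i = 0..<k. mat k k (\<lambda>(i,j). M (f i) (f j)) $$ (i, p i))"
      by (auto intro!: prod.cong)
  qed
  finally show ?thesis .
qed

lemma charpoly_on_char_poly:
  assumes f: "bij_betw f {0..<k} I"
  shows "charpoly_on I M = char_poly (mat k k (\<lambda>(i,j). M (f i) (f j)))"
proof -
  have inj: "inj_on f {0..<k}" using f by (simp add: bij_betw_def)
  have "charpoly_on I M = det (mat k k (\<lambda>(i,j). (if f i = f j then [:0, 1:] else 0) - [:M (f i) (f j):]))"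
    unfolding charpoly_on_def by (rule det_on_reindex[OF f])
  also have "mat k k (\<lambda>(i,j). (if f i = f j then [:0, 1:] else 0) - [:M (f i) (f j):]) =
     char_poly_matrix (mat k k (\<lambda>(i,j). M (f i) (f j)))"
    unfolding char_poly_matrix_def
    by (rule eq_matI) (auto simp: inj_on_eq_iff[OF inj])
  finally show ?thesis unfolding char_poly_def .
qed


lemma pcompose_hom: "comm_ring_hom (\<lambda>p. pcompose p q)"
  by unfold_locales (simp_all add: pcompose_add pcompose_mult)

lemma det_cpm_compose:
  shows "det (map_mat (\<lambda>p. pcompose p q) (char_poly_matrix A)) = pcompose (char_poly A) q"
  unfolding char_poly_def by (rule comm_ring_hom.hom_det[OF pcompose_hom])

lemma det_block_sym:
  fixes P Q :: "'a::idom mat"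
  assumes P: "P \<in> carrier_mat N N" and Q: "Q \<in> carrier_mat N N"
  shows "det (four_block_mat P Q Q P) = det (P - Q) * det (P + Q)"
proof -
  let ?L = "four_block_mat (1\<^sub>m N) (0\<^sub>m N N) (1\<^sub>m N) (1\<^sub>m N) :: 'a mat"
  let ?R = "four_block_mat (1\<^sub>m N) (0\<^sub>m N N) (- 1\<^sub>m N) (1\<^sub>m N) :: 'a mat"
  let ?M = "four_block_mat P Q Q P"
  have cL: "?L \<in> carrier_mat (N+N) (N+N)" by simp
  have cR: "?R \<in> carrier_mat (N+N) (N+N)" by simp
  have cM: "?M \<in> carrier_mat (N+N) (N+N)" using P by simp
  have LM: "?L * ?M = four_block_mat P Q (P + Q) (Q + P)"
    by (subst mult_four_block_mat[OF one_carrier_mat zero_carrier_mat one_carrier_mat one_carrier_mat P Q Q P]) (use P Q in auto)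
  have m1: "X * - 1\<^sub>m N = - X" if "X \<in> carrier_mat N N" for X :: "'a mat"
    by (rule eq_matI) (use that in \<open>auto simp: scalar_prod_def\<close>)
  have LMR: "four_block_mat P Q (P + Q) (Q + P) * ?R = four_block_mat (P - Q) Q (0\<^sub>m N N) (P + Q)"
    apply (subst mult_four_block_mat[OF P Q add_carrier_mat[OF Q] add_carrier_mat[OF P] one_carrier_mat zero_carrier_mat
       uminus_carrier_mat[OF one_carrier_mat] one_carrier_mat])
  proof (rule cong_four_block_mat)
    show "P * 1\<^sub>m N + Q * - 1\<^sub>m N = P - Q" unfolding m1[OF Q] right_mult_one_mat[OF P]
      by (rule eq_matI) (use P Q in auto)
    show "P * 0\<^sub>m N N + Q * 1\<^sub>m N = Q" unfolding right_mult_zero_mat[OF P] right_mult_one_mat[OF Q]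
      by (rule eq_matI) (use P Q in auto)
    have c1: "P + Q \<in> carrier_mat N N" "Q + P \<in> carrier_mat N N" using P Q by auto
    show "(P + Q) * 1\<^sub>m N + (Q + P) * - 1\<^sub>m N = 0\<^sub>m N N" unfolding m1[OF c1(2)] right_mult_one_mat[OF c1(1)]
      by (rule eq_matI) (use P Q in auto)
    show "(P + Q) * 0\<^sub>m N N + (Q + P) * 1\<^sub>m N = P + Q" unfolding right_mult_zero_mat[OF c1(1)] right_mult_one_mat[OF c1(2)]
      by (rule eq_matI) (use P Q in auto)
  qed
  have "det (?L * ?M * ?R) = det ?L * det ?M * det ?R"
    using det_mult[OF mult_carrier_mat[OF cL cM] cR] det_mult[OF cL cM] by simp
  moreover have "det ?L = 1"
    by (subst det_four_block_mat_upper_right_zero[of _ N _ N]) auto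
  moreover have "det ?R = 1"
    by (subst det_four_block_mat_upper_right_zero[of _ N _ N]) auto
  moreover have "det (?L * ?M * ?R) = det (P - Q) * det (P + Q)"
    unfolding LM LMR using P Q
    by (subst det_four_block_mat_lower_left_zero[of _ N _ N]) auto
  ultimately show ?thesis by simp
qed

lemma det_block_XI:
  fixes B C :: "'a::idom poly mat"
  assumes B: "B \<in> carrier_mat n m" and C: "C \<in> carrier_mat m n"
  shows "det (four_block_mat ([:0,1:] \<cdot>\<^sub>m 1\<^sub>m n) B C ([:0,1:] \<cdot>\<^sub>m 1\<^sub>m m)) * [:0,1:]^n
       = det ([:0,0,1:] \<cdot>\<^sub>m 1\<^sub>m n - B * C) * [:0,1:]^m"
proof -
  let ?X = "[:0,1:] :: 'a poly"
  let ?M = "four_block_mat (?X \<cdot>\<^sub>m 1\<^sub>m n) B C (?X \<cdot>\<^sub>m 1\<^sub>m m)"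
  let ?N = "four_block_mat (?X \<cdot>\<^sub>m 1\<^sub>m n) (0\<^sub>m n m) (- C) (1\<^sub>m m)"
  have cM: "?M \<in> carrier_mat (n+m) (n+m)" by simp
  have cN: "?N \<in> carrier_mat (n+m) (n+m)" by simp
  have XX: "[:0,0,1:] = ?X * ?X" by simp
  have MN: "?M * ?N = four_block_mat ([:0,0,1:] \<cdot>\<^sub>m 1\<^sub>m n - B * C) B (0\<^sub>m m n) (?X \<cdot>\<^sub>m 1\<^sub>m m)"
    apply (subst mult_four_block_mat[OF smult_carrier_mat[OF one_carrier_mat] B C smult_carrier_mat[OF one_carrier_mat]
       smult_carrier_mat[OF one_carrier_mat] zero_carrier_mat uminus_carrier_mat[OF C] one_carrier_mat])
  proof (rule cong_four_block_mat)
    have BC: "B * - C = - (B * C)" by (rule eq_matI) (use B C in \<open>auto simp: scalar_prod_def sum_negf\<close>)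
    have XX1: "(?X \<cdot>\<^sub>m 1\<^sub>m n) * (?X \<cdot>\<^sub>m 1\<^sub>m n) = ?X \<cdot>\<^sub>m (?X \<cdot>\<^sub>m 1\<^sub>m n)"
      by (subst mult_smult_assoc_mat[OF one_carrier_mat smult_carrier_mat[OF one_carrier_mat]]) (simp add: left_mult_one_mat)
    show "(?X \<cdot>\<^sub>m 1\<^sub>m n) * (?X \<cdot>\<^sub>m 1\<^sub>m n) + B * - C = [:0,0,1:] \<cdot>\<^sub>m 1\<^sub>m n - B * C"
      unfolding XX1 BC by (rule eq_matI) (use B C in auto)
    show "(?X \<cdot>\<^sub>m 1\<^sub>m n) * 0\<^sub>m n m + B * 1\<^sub>m m = B"
      unfolding right_mult_one_mat[OF B] by (rule eq_matI) (use B in auto)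
    have CX: "C * (?X \<cdot>\<^sub>m 1\<^sub>m n) = ?X \<cdot>\<^sub>m C"
      by (subst mult_smult_distrib[OF C one_carrier_mat]) (simp add: right_mult_one_mat[OF C])
    have XC: "(?X \<cdot>\<^sub>m 1\<^sub>m m) * (- C) = ?X \<cdot>\<^sub>m (- C)"
      by (subst mult_smult_assoc_mat[OF one_carrier_mat uminus_carrier_mat[OF C]]) (simp only: left_mult_one_mat[OF uminus_carrier_mat[OF C]])
    show "C * (?X \<cdot>\<^sub>m 1\<^sub>m n) + (?X \<cdot>\<^sub>m 1\<^sub>m m) * - C = 0\<^sub>m m n"
      unfolding CX XC by (rule eq_matI) (use C in auto)
    show "C * 0\<^sub>m n m + (?X \<cdot>\<^sub>m 1\<^sub>m m) * 1\<^sub>m m = ?X \<cdot>\<^sub>m 1\<^sub>m m"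
      by (rule eq_matI) (use C in auto)
  qed
  have "det (?M * ?N) = det ?M * det ?N" by (rule det_mult[OF cM cN])
  moreover have "det ?N = ?X ^ n"
    by (subst det_four_block_mat_upper_right_zero[of _ n _ m]) (use C in auto)
  moreover have "det (?M * ?N) = det ([:0,0,1:] \<cdot>\<^sub>m 1\<^sub>m n - B * C) * ?X ^ m"
    unfolding MN using B C
    by (subst det_four_block_mat_lower_left_zero[of _ n _ m]) auto
  ultimately show ?thesis by simp
qed


lemma finite_sg_edges: "finite V \<Longrightarrow> finite (sg_edges V s)"
proof -
  assume "finite V"
  moreover have "sg_edges V s \<subseteq> Pow V" unfolding sg_edges_def by auto
  ultimately show ?thesis by (meson finite_Pow_iff finite_subset)
qed

lemma incidence:
  assumes sg: "signed_graph V s" and vs: "valid_subdiv_signs V s \<theta>" and u: "u \<in> V" and w: "w \<in> V"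
  shows "(\<Sum>e\<in>sg_edges V s. real_of_int (if u \<in> e then \<theta> u e else 0) * real_of_int (if w \<in> e then \<theta> w e else 0))
         = lap_matrix V s u w"
proof -
  have fin: "finite V" and sym: "\<And>a b. s a b = s b a" and irr: "\<And>a. s a a = 0"
    and sup: "\<And>a b. s a b \<noteq> 0 \<Longrightarrow> a \<in> V \<and> b \<in> V" using sg unfolding signed_graph_def by auto
  have th: "\<And>e v. e \<in> sg_edges V s \<Longrightarrow> v \<in> e \<Longrightarrow> \<theta> v e \<in> {-1, 1}" using vs unfolding valid_subdiv_signs_def by blast
  have th2: "\<And>a b. a \<in> V \<Longrightarrow> b \<in> V \<Longrightarrow> s a b \<noteq> 0 \<Longrightarrow> \<theta> a {a, b} * \<theta> b {a, b} = - s a b"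
    using vs unfolding valid_subdiv_signs_def by blast
  let ?E = "sg_edges V s"
  have finE: "finite ?E" using finite_sg_edges[OF fin] .
  have edge_iff: "{a, b} \<in> ?E \<longleftrightarrow> s a b \<noteq> 0" if "a \<in> V" "b \<in> V" for a b
  proof
    assume "{a,b} \<in> ?E"
    then obtain c d where cd: "{a,b} = {c,d}" "s c d \<noteq> 0" unfolding sg_edges_def by auto
    hence "(a = c \<and> b = d) \<or> (a = d \<and> b = c)" by (auto simp: doubleton_eq_iff)
    thus "s a b \<noteq> 0" using cd sym by auto
  next
    assume "s a b \<noteq> 0" thus "{a,b} \<in> ?E" unfolding sg_edges_def using that by blast
  qed
  show ?thesis
  proof (cases "u = w")
    case True
    have "(\<Sum>e\<in>?E. real_of_int (if u \<in> e then \<theta> u e else 0) * real_of_int (if u \<in> e then \<theta> u e else 0))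
        = (\<Sum>e\<in>?E. if u \<in> e then 1 else 0)"
    proof (rule sum.cong[OF refl])
      fix e assume "e \<in> ?E"
      thus "real_of_int (if u \<in> e then \<theta> u e else 0) * real_of_int (if u \<in> e then \<theta> u e else 0) = (if u \<in> e then 1 else 0)"
        using th[of e u] by auto
    qed
    also have "\<dots> = real (card {e\<in>?E. u \<in> e})"
      using sum.inter_restrict[OF finE, of "\<lambda>_. 1::real" "{e. u \<in> e}"] finE
      by (simp add: Int_def conj_commute)
    also have "card {e\<in>?E. u \<in> e} = card {x\<in>V. s u x \<noteq> 0}"
    proof (rule HOL.sym, rule bij_betw_same_card[of "\<lambda>x. {u, x}"])
      show "bij_betw (\<lambda>x. {u, x}) {x \<in> V. s u x \<noteq> 0} {e \<in> ?E. u \<in> e}"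
        unfolding bij_betw_def
      proof
        show "inj_on (\<lambda>x. {u, x}) {x \<in> V. s u x \<noteq> 0}"
          by (rule inj_onI) (auto simp: doubleton_eq_iff)
        show "(\<lambda>x. {u, x}) ` {x \<in> V. s u x \<noteq> 0} = {e \<in> ?E. u \<in> e}"
        proof
          show "(\<lambda>x. {u, x}) ` {x \<in> V. s u x \<noteq> 0} \<subseteq> {e \<in> ?E. u \<in> e}"
            using edge_iff u by auto
          show "{e \<in> ?E. u \<in> e} \<subseteq> (\<lambda>x. {u, x}) ` {x \<in> V. s u x \<noteq> 0}"
          proof
            fix e assume e: "e \<in> {e \<in> ?E. u \<in> e}"
            then obtain a b where ab: "e = {a,b}" "a \<in> V" "b \<in> V" "s a b \<noteq> 0" unfolding sg_edges_def by auto
            have "u = a \<or> u = b" using e ab by auto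
            thus "e \<in> (\<lambda>x. {u, x}) ` {x \<in> V. s u x \<noteq> 0}"
            proof
              assume "u = a" thus ?thesis using ab by auto
            next
              assume "u = b" hence "e = {u, a}" "s u a \<noteq> 0" using ab sym by auto
              thus ?thesis using ab by auto
            qed
          qed
        qed
      qed
    qed
    also have "real (card {x\<in>V. s u x \<noteq> 0}) = lap_matrix V s u u" by (simp add: lap_matrix_def irr)
    finally show ?thesis unfolding True[symmetric] .
  next
    case False
    have "(\<Sum>e\<in>?E. real_of_int (if u \<in> e then \<theta> u e else 0) * real_of_int (if w \<in> e then \<theta> w e else 0))
        = (\<Sum>e\<in>?E. if e = {u, w} then real_of_int (\<theta> u {u,w} * \<theta> w {u,w}) else 0)"
    proof (rule sum.cong[OF refl])
      fix e assume e: "e \<in> ?E"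
      then obtain a b where ab: "e = {a,b}" "a \<in> V" "b \<in> V" "s a b \<noteq> 0" unfolding sg_edges_def by auto
      have "u \<in> e \<and> w \<in> e \<longleftrightarrow> e = {u, w}" using ab False by auto
      thus "real_of_int (if u \<in> e then \<theta> u e else 0) * real_of_int (if w \<in> e then \<theta> w e else 0) =
            (if e = {u, w} then real_of_int (\<theta> u {u,w} * \<theta> w {u,w}) else 0)"
        by (cases "e = {u,w}") auto
    qed
    also have "\<dots> = (if {u,w} \<in> ?E then real_of_int (\<theta> u {u,w} * \<theta> w {u,w}) else 0)"
      using sum.delta[OF finE, of "{u,w}" "\<lambda>_. real_of_int (\<theta> u {u,w} * \<theta> w {u,w})"] by (simp only:)
    also have "\<dots> = lap_matrix V s u w"
      using edge_iff[OF u w] th2[OF u w] False by (auto simp: lap_matrix_def)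
    finally show ?thesis .
  qed
qed


lemma sym_real_root:
  fixes A :: "real mat"
  assumes A: "A \<in> carrier_mat n n" and n: "n > 0" and sym: "\<And>i j. i < n \<Longrightarrow> j < n \<Longrightarrow> A $$ (i,j) = A $$ (j,i)"
  shows "\<exists>x. poly (char_poly A) x = 0"
proof -
  let ?Ac = "map_mat complex_of_real A"
  have Ac: "?Ac \<in> carrier_mat n n" using A by simp
  have cp: "char_poly ?Ac = map_poly of_real (char_poly A)"
    by (rule of_real_hom.char_poly_hom[OF A])
  have "degree (char_poly ?Ac) = n" using degree_monic_char_poly[OF Ac] by simp
  hence "\<not> constant (poly (char_poly ?Ac))" using n constant_degree[of "char_poly ?Ac"] by simp
  then obtain l where l: "poly (char_poly ?Ac) l = 0" using fundamental_theorem_of_algebra by blast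
  hence "eigenvalue ?Ac l" using eigenvalue_root_char_poly[OF Ac] by simp
  then obtain v where ev: "eigenvector ?Ac v l" unfolding eigenvalue_def by blast
  hence v: "v \<in> carrier_vec n" and v0: "v \<noteq> 0\<^sub>v n" and Av: "?Ac *\<^sub>v v = l \<cdot>\<^sub>v v"
    unfolding eigenvector_def using A by auto
  have dv: "dim_vec v = n" using v by simp
  define q where "q = (\<Sum>i<n. \<Sum>j<n. cnj (v$i) * complex_of_real (A $$ (i,j)) * v$j)"
  define S where "S = (\<Sum>i<n. cnj (v$i) * v$i)"
  have Avi: "(?Ac *\<^sub>v v) $ i = (\<Sum>j<n. complex_of_real (A $$ (i,j)) * v$j)" if "i < n" for i
    using that A dv by (auto simp: scalar_prod_def lessThan_atLeast0 intro!: sum.cong)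
  have "q = (\<Sum>i<n. cnj (v$i) * (?Ac *\<^sub>v v) $ i)"
    unfolding q_def by (rule sum.cong[OF refl]) (simp add: Avi sum_distrib_left mult.assoc)
  also have "\<dots> = (\<Sum>i<n. cnj (v$i) * (l * v$i))"
    by (rule sum.cong[OF refl]) (simp add: Av dv)
  also have "\<dots> = l * S" unfolding S_def by (simp add: sum_distrib_left algebra_simps)
  finally have qS: "q = l * S" .
  have "cnj q = (\<Sum>i<n. \<Sum>j<n. v$i * complex_of_real (A $$ (i,j)) * cnj (v$j))"
    unfolding q_def by (simp add: cnj_sum)
  also have "\<dots> = (\<Sum>j<n. \<Sum>i<n. v$i * complex_of_real (A $$ (i,j)) * cnj (v$j))"
    by (rule sum.swap)
  also have "\<dots> = q" unfolding q_def
    by (intro sum.cong refl) (simp add: sym mult.commute mult.left_commute)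
  finally have "cnj q = q" .
  hence "Im (cnj q) = Im q" by simp
  hence Imq: "Im q = 0" by simp
  have Sr: "S = complex_of_real (\<Sum>i<n. (cmod (v$i))^2)"
    unfolding S_def of_real_sum by (intro sum.cong refl) (simp only: complex_norm_square mult.commute)
  have "\<exists>k<n. v $ k \<noteq> 0"
  proof (rule ccontr)
    assume "\<not> ?thesis"
    hence "v = 0\<^sub>v n" by (intro eq_vecI) (auto simp: dv)
    thus False using v0 by simp
  qed
  then obtain k where k: "k < n" "v $ k \<noteq> 0" by blast
  have "(\<Sum>i<n. (cmod (v$i))^2) \<ge> (cmod (v$k))^2"
    by (rule member_le_sum) (use k in auto)
  moreover have "(cmod (v$k))^2 > 0" using k by simp
  ultimately have Spos: "(\<Sum>i<n. (cmod (v$i))^2) > 0" by linarith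
  have "Im q = Im l * (\<Sum>i<n. (cmod (v$i))^2)" unfolding qS Sr by simp
  hence "Im l = 0" using Imq Spos by simp
  hence "l = complex_of_real (Re l)" by (simp add: complex_eq_iff)
  hence "poly (map_poly of_real (char_poly A)) (complex_of_real (Re l)) = 0" using l cp by simp
  hence "complex_of_real (poly (char_poly A) (Re l)) = 0" by (simp add: of_real_hom.poly_map_poly)
  thus ?thesis by blast
qed


lemma count_image_single:
  assumes "\<And>z. z \<in># A \<Longrightarrow> f z = x \<longleftrightarrow> z = y"
  shows "count (image_mset f A) x = count A y"
proof -
  have "f -` {x} \<inter> set_mset A = {y} \<inter> set_mset A" using assms by auto
  thus ?thesis unfolding count_image_mset by (cases "y \<in># A") (auto simp: not_in_iff)
qed

lemma pcompose_power_left: "pcompose (p ^ k) q = (pcompose p q) ^ k"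
  for p q :: "'a::comm_semiring_1 poly"
  by (induction k) (simp_all add: pcompose_mult)

lemma order_factor:
  fixes q :: "'a::idom poly"
  assumes "poly q a \<noteq> 0"
  shows "order a ([:-a,1:]^k * q) = k"
proof -
  have q0: "q \<noteq> 0" using assms by auto
  have "[:-a,1:]^k * q \<noteq> 0" using q0 by simp
  hence "order a ([:-a,1:]^k * q) = order a ([:-a,1:]^k) + order a q" by (rule order_mult)
  thus ?thesis using order_power_n_n[of a k] order_0I[OF assms] by simp
qed

lemma order_shift:
  fixes p :: "'a::idom poly"
  assumes p: "p \<noteq> 0"
  shows "order a (pcompose p [:c,1:]) = order (a + c) p"
proof -
  obtain q where q: "p = [:-(a+c),1:]^order (a+c) p * q" and nd: "\<not> [:-(a+c),1:] dvd q"
    using order_decomp[OF p] by blast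
  have pq: "poly q (a+c) \<noteq> 0" using nd poly_eq_0_iff_dvd by blast
  have lin: "pcompose [:-(a+c),1:] [:c,1:] = [:-a,1:]" by (simp add: pcompose_pCons)
  have "pcompose p [:c,1:] = [:-a,1:]^order (a+c) p * pcompose q [:c,1:]"
    by (subst q) (simp add: pcompose_mult pcompose_power_left lin)
  moreover have "poly (pcompose q [:c,1:]) a \<noteq> 0" using pq by (simp add: poly_pcompose add.commute)
  ultimately show ?thesis using order_factor by metis
qed

lemma order_sq:
  fixes p :: "real poly"
  assumes p: "p \<noteq> 0" and x: "x \<noteq> 0"
  shows "order x (pcompose p [:0,0,1:]) = order (x^2) p"
proof -
  obtain q where q: "p = [:-(x^2),1:]^order (x^2) p * q" and nd: "\<not> [:-(x^2),1:] dvd q"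
    using order_decomp[OF p] by blast
  have pq: "poly q (x^2) \<noteq> 0" using nd poly_eq_0_iff_dvd by blast
  have lin: "pcompose [:-(x^2),1:] [:0,0,1:] = [:-x,1:] * [:x,1:]"
    by (simp add: pcompose_pCons power2_eq_square)
  define k where "k = order (x^2) p"
  have "pcompose p [:0,0,1:] = (pcompose [:-(x^2),1:] [:0,0,1:])^k * pcompose q [:0,0,1:]"
    by (subst q) (simp only: pcompose_mult pcompose_power_left k_def)
  also have "\<dots> = [:-x,1:]^k * ([:x,1:]^k * pcompose q [:0,0,1:])"
    unfolding lin power_mult_distrib mult.assoc ..
  finally have "pcompose p [:0,0,1:] = [:-x,1:]^k * ([:x,1:]^k * pcompose q [:0,0,1:])" .
  moreover have "poly ([:x,1:]^k * pcompose q [:0,0,1:]) x \<noteq> 0"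
    using pq x by (simp add: poly_pcompose power2_eq_square)
  ultimately show ?thesis using order_factor k_def by metis
qed

lemma proots_shift:
  fixes p :: "'a::idom poly"
  assumes p: "p \<noteq> 0"
  shows "proots (pcompose p [:c,1:]) = image_mset (\<lambda>x. x - c) (proots p)"
proof (rule multiset_eqI)
  fix a
  have pc: "pcompose p [:c,1:] \<noteq> 0" using p pcompose_eq_0[of p "[:c,1:]"] by auto
  have "count (image_mset (\<lambda>x. x - c) (proots p)) a = count (proots p) (a + c)"
    by (rule count_image_single) auto
  thus "count (proots (pcompose p [:c,1:])) a = count (image_mset (\<lambda>x. x - c) (proots p)) a"
    using pc p by (simp add: order_shift)
qed

lemma proots_sq:
  fixes p :: "real poly"
  assumes p: "p \<noteq> 0" and pos: "\<forall>\<mu>\<in>#proots p. \<mu> > 0"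
  shows "proots (pcompose p [:0,0,1:]) = image_mset sqrt (proots p) + image_mset (\<lambda>\<mu>. - sqrt \<mu>) (proots p)"
proof (rule multiset_eqI)
  fix x :: real
  have pc: "pcompose p [:0,0,1:] \<noteq> 0" using p pcompose_eq_0[of p "[:0,0,1:]"] by auto
  have p0: "poly p 0 \<noteq> 0" using pos p by (metis count_proots order_root less_irrefl count_eq_zero_iff)
  show "count (proots (pcompose p [:0,0,1:])) x = count (image_mset sqrt (proots p) + image_mset (\<lambda>\<mu>. - sqrt \<mu>) (proots p)) x"
  proof (cases "x > 0")
    case True
    have a: "count (image_mset sqrt (proots p)) x = count (proots p) (x^2)"
      by (rule count_image_single) (use True pos in auto)
    have "(\<lambda>\<mu>. - sqrt \<mu>) -` {x} \<inter> set_mset (proots p) = {}"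
    proof (rule ccontr)
      assume "(\<lambda>\<mu>. - sqrt \<mu>) -` {x} \<inter> set_mset (proots p) \<noteq> {}"
      then obtain z where "z \<in># proots p" "- sqrt z = x" by auto
      moreover have "sqrt z \<ge> 0" using \<open>z \<in># proots p\<close> pos by auto
      ultimately show False using True by linarith
    qed
    hence b: "count (image_mset (\<lambda>\<mu>. - sqrt \<mu>) (proots p)) x = 0"
      by (simp add: count_image_mset)
    show ?thesis using a b True p pc by (simp add: order_sq)
  next
    case False
    show ?thesis
    proof (cases "x = 0")
      case True
      have "order 0 (pcompose p [:0,0,1:]) = 0" by (rule order_0I) (simp add: poly_pcompose p0)
      moreover have "count (image_mset sqrt (proots p)) 0 = 0"
        using pos by (auto simp: count_image_mset)
      moreover have "count (image_mset (\<lambda>\<mu>. - sqrt \<mu>) (proots p)) 0 = 0"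
        using pos by (auto simp: count_image_mset)
      ultimately show ?thesis using True pc by simp
    next
      case False
      hence xn: "x < 0" using \<open>\<not> x > 0\<close> by simp
      have a: "count (image_mset (\<lambda>\<mu>. - sqrt \<mu>) (proots p)) x = count (proots p) (x^2)"
      proof (rule count_image_single)
        fix z assume "z \<in># proots p"
        hence z: "z > 0" using pos by auto
        show "(- sqrt z = x) = (z = x^2)"
        proof
          assume "- sqrt z = x" thus "z = x^2" using z by auto
        next
          assume "z = x^2" thus "- sqrt z = x" using xn by simp
        qed
      qed
      have "sqrt -` {x} \<inter> set_mset (proots p) = {}"
      proof (rule ccontr)
        assume "sqrt -` {x} \<inter> set_mset (proots p) \<noteq> {}"
        then obtain z where "z \<in># proots p" "sqrt z = x" by auto
        moreover have "sqrt z \<ge> 0" using \<open>z \<in># proots p\<close> pos by auto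
        ultimately show False using xn by linarith
      qed
      hence b: "count (image_mset sqrt (proots p)) x = 0"
        by (simp add: count_image_mset)
      show ?thesis using a b xn p pc by (simp add: order_sq)
    qed
  qed
qed

lemma sum_mset_eq_iff_pointwise:
  fixes f g :: "'b \<Rightarrow> real"
  assumes "\<And>x. x \<in># M \<Longrightarrow> g x \<le> f x"
  shows "(\<Sum>x\<in>#M. f x) = (\<Sum>x\<in>#M. g x) \<longleftrightarrow> (\<forall>x\<in>#M. f x = g x)"
  using assms
proof (induction M)
  case empty thus ?case by simp
next
  case (add a M)
  have le: "(\<Sum>x\<in>#M. g x) \<le> (\<Sum>x\<in>#M. f x)"
    using add.prems by (intro sum_mset_mono) auto
  have ga: "g a \<le> f a" using add.prems by auto
  have IH: "(\<Sum>x\<in>#M. f x) = (\<Sum>x\<in>#M. g x) \<longleftrightarrow> (\<forall>x\<in>#M. f x = g x)"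
    using add.IH add.prems by auto
  show ?case using le ga IH by auto
qed


lemma sum_RS:
  "(\<Sum>x\<in>#image_mset sqrt R + image_mset (\<lambda>\<mu>. - sqrt \<mu>) R. g x) = (\<Sum>\<mu>\<in>#R. g (sqrt \<mu>) + g (- sqrt \<mu>))"
  by (simp add: multiset.map_comp o_def sum_mset.distrib)

lemma abs_aux: "(t::real) \<ge> 0 \<Longrightarrow> (\<bar>t + 1\<bar> + \<bar>t - 1\<bar>) + (\<bar>- t + 1\<bar> + \<bar>- t - 1\<bar>) = 2 * (t + 1) + 2 * \<bar>t - 1\<bar>"
  by (cases "t \<ge> 1") (simp_all add: abs_if)

lemma spectral_core:
  fixes pL :: "real poly" and N :: nat
  assumes pL0: "pL \<noteq> 0" and pos: "\<forall>\<mu>\<in>#proots pL. \<mu> > 0" and ne: "proots pL \<noteq> {#}"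
  shows "(proots (pcompose (pcompose pL [:0,0,1:]) [:-1,1:] * pcompose (pcompose pL [:0,0,1:]) [:1,1:])
           \<noteq> proots (((-1)^N * pcompose (pcompose pL [:0,0,1:]) [:0,-1:]) * pcompose pL [:0,0,1:])
         \<and> (\<Sum>x\<in>#proots (pcompose (pcompose pL [:0,0,1:]) [:-1,1:] * pcompose (pcompose pL [:0,0,1:]) [:1,1:]). \<bar>x\<bar>)
           = (\<Sum>x\<in>#proots (((-1)^N * pcompose (pcompose pL [:0,0,1:]) [:0,-1:]) * pcompose pL [:0,0,1:]). \<bar>x\<bar>))
       \<longleftrightarrow> (\<forall>\<mu>\<in>#proots pL. \<mu> \<ge> 1)"
proof -
  define R where "R = proots pL"
  define pS where "pS = pcompose pL [:0,0,1:]"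
  define RS where "RS = image_mset sqrt R + image_mset (\<lambda>\<mu>. - sqrt \<mu>) R"
  have pS0: "pS \<noteq> 0" unfolding pS_def using pL0 pcompose_eq_0[of pL "[:0,0,1:]"] by auto
  have RS: "proots pS = RS" unfolding pS_def RS_def R_def by (rule proots_sq[OF pL0 pos])
  have sym: "pcompose pS [:0,-1:] = pS"
  proof -
    have "pcompose [:0,0,1:] [:0,-1::real:] = [:0,0,1:]" by (simp add: pcompose_pCons)
    thus ?thesis unfolding pS_def by (simp add: pcompose_assoc[symmetric])
  qed
  have m1: "proots ((-1)^N :: real poly) = {#}" by (simp add: proots_power)
  have m10: "((-1)^N :: real poly) \<noteq> 0" by simp
  have pK: "proots (((-1)^N * pcompose pS [:0,-1:]) * pS) = RS + RS"
    unfolding sym using pS0 m10 by (simp add: proots_mult m1 RS)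
  have pC: "proots (pcompose pS [:-1,1:] * pcompose pS [:1,1:]) = image_mset (\<lambda>x. x - -1) RS + image_mset (\<lambda>x. x - 1) RS"
  proof -
    have a: "pcompose pS [:-1,1:] \<noteq> 0" using pS0 pcompose_eq_0[of pS "[:-1,1:]"] by auto
    have b: "pcompose pS [:1,1:] \<noteq> 0" using pS0 pcompose_eq_0[of pS "[:1,1:]"] by auto
    show ?thesis using a b by (simp add: proots_mult proots_shift[OF pS0] RS)
  qed
  have sC: "(\<Sum>x\<in>#proots (pcompose pS [:-1,1:] * pcompose pS [:1,1:]). \<bar>x\<bar>)
     = (\<Sum>\<mu>\<in>#R. 2 * (sqrt \<mu> + 1) + 2 * \<bar>sqrt \<mu> - 1\<bar>)"
  proof -
    have "(\<Sum>x\<in>#proots (pcompose pS [:-1,1:] * pcompose pS [:1,1:]). \<bar>x\<bar>) = (\<Sum>y\<in>#RS. \<bar>y + 1\<bar> + \<bar>y - 1\<bar>)"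
      unfolding pC by (simp add: multiset.map_comp o_def sum_mset.distrib)
    also have "\<dots> = (\<Sum>\<mu>\<in>#R. (\<bar>sqrt \<mu> + 1\<bar> + \<bar>sqrt \<mu> - 1\<bar>) + (\<bar>- sqrt \<mu> + 1\<bar> + \<bar>- sqrt \<mu> - 1\<bar>))"
      unfolding RS_def by (rule sum_RS)
    also have "\<dots> = (\<Sum>\<mu>\<in>#R. 2 * (sqrt \<mu> + 1) + 2 * \<bar>sqrt \<mu> - 1\<bar>)"
    proof (rule arg_cong[where f = sum_mset], rule image_mset_cong)
      fix \<mu> assume "\<mu> \<in># R"
      hence "sqrt \<mu> \<ge> 0" using pos R_def by auto
      thus "(\<bar>sqrt \<mu> + 1\<bar> + \<bar>sqrt \<mu> - 1\<bar>) + (\<bar>- sqrt \<mu> + 1\<bar> + \<bar>- sqrt \<mu> - 1\<bar>) = 2 * (sqrt \<mu> + 1) + 2 * \<bar>sqrt \<mu> - 1\<bar>"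
        by (rule abs_aux)
    qed
    finally show ?thesis .
  qed
  have sK: "(\<Sum>x\<in>#proots (((-1)^N * pcompose pS [:0,-1:]) * pS). \<bar>x\<bar>) = (\<Sum>\<mu>\<in>#R. 4 * sqrt \<mu>)"
  proof -
    have "(\<Sum>x\<in>#proots (((-1)^N * pcompose pS [:0,-1:]) * pS). \<bar>x\<bar>) = (\<Sum>y\<in>#RS. \<bar>y\<bar>) + (\<Sum>y\<in>#RS. \<bar>y\<bar>)"
      unfolding pK by simp
    also have "(\<Sum>y\<in>#RS. \<bar>y\<bar>) = (\<Sum>\<mu>\<in>#R. \<bar>sqrt \<mu>\<bar> + \<bar>- sqrt \<mu>\<bar>)"
      unfolding RS_def by (rule sum_RS)
    also have "\<dots> = (\<Sum>\<mu>\<in>#R. 2 * sqrt \<mu>)"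
    proof (rule arg_cong[where f = sum_mset], rule image_mset_cong)
      fix \<mu> assume "\<mu> \<in># R"
      hence "\<mu> > 0" using pos R_def by auto
      thus "\<bar>sqrt \<mu>\<bar> + \<bar>- sqrt \<mu>\<bar> = 2 * sqrt \<mu>" by simp
    qed
    also have "(\<Sum>\<mu>\<in>#R. 2 * sqrt \<mu>) + (\<Sum>\<mu>\<in>#R. 2 * sqrt \<mu>) = (\<Sum>\<mu>\<in>#R. 2 * sqrt \<mu> + 2 * sqrt \<mu>)"
      by (rule sum_mset.distrib[symmetric])
    also have "\<dots> = (\<Sum>\<mu>\<in>#R. 4 * sqrt \<mu>)" by (rule arg_cong[where f = sum_mset], rule image_mset_cong) simp
    finally show ?thesis .
  qed
  have eq_iff: "(\<Sum>\<mu>\<in>#R. 2 * (sqrt \<mu> + 1) + 2 * \<bar>sqrt \<mu> - 1\<bar>) = (\<Sum>\<mu>\<in>#R. 4 * sqrt \<mu>)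
        \<longleftrightarrow> (\<forall>\<mu>\<in>#R. \<mu> \<ge> 1)"
  proof -
    have "(\<Sum>\<mu>\<in>#R. 2 * (sqrt \<mu> + 1) + 2 * \<bar>sqrt \<mu> - 1\<bar>) = (\<Sum>\<mu>\<in>#R. 4 * sqrt \<mu>)
        \<longleftrightarrow> (\<forall>\<mu>\<in>#R. 2 * (sqrt \<mu> + 1) + 2 * \<bar>sqrt \<mu> - 1\<bar> = 4 * sqrt \<mu>)"
      by (rule sum_mset_eq_iff_pointwise) (auto simp: abs_if)
    also have "\<dots> \<longleftrightarrow> (\<forall>\<mu>\<in>#R. \<mu> \<ge> 1)"
    proof (intro ball_cong refl)
      fix \<mu> assume "\<mu> \<in># R"
      hence p: "\<mu> > 0" using pos R_def by auto
      show "2 * (sqrt \<mu> + 1) + 2 * \<bar>sqrt \<mu> - 1\<bar> = 4 * sqrt \<mu> \<longleftrightarrow> \<mu> \<ge> 1"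
      proof
        assume "2 * (sqrt \<mu> + 1) + 2 * \<bar>sqrt \<mu> - 1\<bar> = 4 * sqrt \<mu>"
        hence "sqrt \<mu> \<ge> 1" by (auto simp: abs_if split: if_splits)
        thus "\<mu> \<ge> 1" using p by (metis real_sqrt_ge_1_iff)
      next
        assume "\<mu> \<ge> 1"
        hence "sqrt \<mu> \<ge> 1" by simp
        thus "2 * (sqrt \<mu> + 1) + 2 * \<bar>sqrt \<mu> - 1\<bar> = 4 * sqrt \<mu>" by simp
      qed
    qed
    finally show ?thesis .
  qed
  have noncos: "proots (pcompose pS [:-1,1:] * pcompose pS [:1,1:]) \<noteq> proots (((-1)^N * pcompose pS [:0,-1:]) * pS)"
  proof
    assume eq: "proots (pcompose pS [:-1,1:] * pcompose pS [:1,1:]) = proots (((-1)^N * pcompose pS [:0,-1:]) * pS)"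
    define \<mu>0 where "\<mu>0 = Max (set_mset R)"
    have fin: "finite (set_mset R)" by simp
    have neR: "set_mset R \<noteq> {}" using ne R_def by simp
    have m0: "\<mu>0 \<in># R" unfolding \<mu>0_def using Max_in[OF fin neR] by simp
    have mx: "\<mu> \<le> \<mu>0" if "\<mu> \<in># R" for \<mu> unfolding \<mu>0_def using Max_ge[OF fin] that by simp
    have "sqrt \<mu>0 \<in># RS" unfolding RS_def using m0 by simp
    hence "sqrt \<mu>0 - -1 \<in># proots (pcompose pS [:-1,1:] * pcompose pS [:1,1:])" unfolding pC by simp
    hence "sqrt \<mu>0 + 1 \<in># RS + RS" unfolding eq pK by simp
    hence "sqrt \<mu>0 + 1 \<in># RS" by simp
    then obtain \<mu> where \<mu>: "\<mu> \<in># R" "sqrt \<mu>0 + 1 = sqrt \<mu> \<or> sqrt \<mu>0 + 1 = - sqrt \<mu>"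
      unfolding RS_def by auto
    have "sqrt \<mu> \<le> sqrt \<mu>0" using mx[OF \<mu>(1)] by simp
    moreover have "sqrt \<mu> \<ge> 0" "sqrt \<mu>0 \<ge> 0" using \<mu>(1) m0 pos R_def by auto
    ultimately show False using \<mu>(2) by linarith
  qed
  show ?thesis
    unfolding pS_def[symmetric] R_def[symmetric] using noncos sC sK eq_iff by simp
qed


lemma bij_sum_idx:
  fixes a b :: nat
  assumes f: "bij_betw f {0..<a} A" and g: "bij_betw g {0..<b} B"
  shows "bij_betw (\<lambda>i. if i < a then Inl (f i) else Inr (g (i - a))) {0..<a+b} (Inl ` A \<union> Inr ` B)"
proof -
  have fi: "inj_on f {0..<a}" and fA: "f ` {0..<a} = A" using f by (auto simp: bij_betw_def)
  have gi: "inj_on g {0..<b}" and gB: "g ` {0..<b} = B" using g by (auto simp: bij_betw_def)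
  show ?thesis unfolding bij_betw_def
  proof
    show "inj_on (\<lambda>i. if i < a then Inl (f i) else Inr (g (i - a))) {0..<a + b}"
    proof (rule inj_onI)
      fix x y assume x: "x \<in> {0..<a+b}" and y: "y \<in> {0..<a+b}"
        and e: "(if x < a then Inl (f x) else Inr (g (x - a))) = (if y < a then Inl (f y) else Inr (g (y - a)))"
      show "x = y"
      proof (cases "x < a"; cases "y < a")
        assume xa: "x < a" "y < a"
        hence "f x = f y" using e by auto
        moreover have "x \<in> {0..<a}" "y \<in> {0..<a}" using xa by auto
        ultimately show ?thesis using inj_onD[OF fi] by blast
      next
        assume "\<not> x < a" "\<not> y < a"
        hence "g (x - a) = g (y - a)" "x - a \<in> {0..<b}" "y - a \<in> {0..<b}" using e x y by auto
        hence "x - a = y - a" using gi by (auto dest: inj_onD)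
        thus ?thesis using \<open>\<not> x < a\<close> \<open>\<not> y < a\<close> by simp
      qed (use e in auto)
    qed
    show "(\<lambda>i. if i < a then Inl (f i) else Inr (g (i - a))) ` {0..<a + b} = Inl ` A \<union> Inr ` B"
    proof
      show "(\<lambda>i. if i < a then Inl (f i) else Inr (g (i - a))) ` {0..<a + b} \<subseteq> Inl ` A \<union> Inr ` B"
        using fA gB by auto
      show "Inl ` A \<union> Inr ` B \<subseteq> (\<lambda>i. if i < a then Inl (f i) else Inr (g (i - a))) ` {0..<a + b}"
      proof
        fix z assume "z \<in> Inl ` A \<union> Inr ` B"
        then consider (l) x where "x \<in> A" "z = Inl x" | (r) y where "y \<in> B" "z = Inr y" by blast
        thus "z \<in> (\<lambda>i. if i < a then Inl (f i) else Inr (g (i - a))) ` {0..<a + b}"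
        proof cases
          case l
          then obtain i where "i < a" "f i = x" using fA by auto
          thus ?thesis using l by (intro image_eqI[of _ _ i]) auto
        next
          case r
          then obtain i where "i < b" "g i = y" using gB by auto
          thus ?thesis using r by (intro image_eqI[of _ _ "i + a"]) auto
        qed
      qed
    qed
  qed
qed

lemma bij_prod_idx:
  fixes a :: nat
  assumes f: "bij_betw f {0..<a} A"
  shows "bij_betw (\<lambda>i. if i < a then (f i, False) else (f (i - a), True)) {0..<a+a} (A \<times> (UNIV :: bool set))"
proof -
  have fi: "inj_on f {0..<a}" and fA: "f ` {0..<a} = A" using f by (auto simp: bij_betw_def)
  show ?thesis unfolding bij_betw_def
  proof
    show "inj_on (\<lambda>i. if i < a then (f i, False) else (f (i - a), True)) {0..<a + a}"
    proof (rule inj_onI)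
      fix x y assume x: "x \<in> {0..<a+a}" and y: "y \<in> {0..<a+a}"
        and e: "(if x < a then (f x, False) else (f (x - a), True)) = (if y < a then (f y, False) else (f (y - a), True))"
      show "x = y"
      proof (cases "x < a"; cases "y < a")
        assume xa: "x < a" "y < a"
        hence "f x = f y" using e by auto
        moreover have "x \<in> {0..<a}" "y \<in> {0..<a}" using xa by auto
        ultimately show ?thesis using inj_onD[OF fi] by blast
      next
        assume "\<not> x < a" "\<not> y < a"
        hence "f (x - a) = f (y - a)" "x - a \<in> {0..<a}" "y - a \<in> {0..<a}" using e x y by auto
        hence "x - a = y - a" using fi by (auto dest: inj_onD)
        thus ?thesis using \<open>\<not> x < a\<close> \<open>\<not> y < a\<close> by simp
      qed (use e in auto)
    qed
    show "(\<lambda>i. if i < a then (f i, False) else (f (i - a), True)) ` {0..<a + a} = A \<times> UNIV"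
    proof
      show "(\<lambda>i. if i < a then (f i, False) else (f (i - a), True)) ` {0..<a + a} \<subseteq> A \<times> UNIV"
        using fA by auto
      show "A \<times> UNIV \<subseteq> (\<lambda>i. if i < a then (f i, False) else (f (i - a), True)) ` {0..<a + a}"
      proof
        fix z assume "z \<in> A \<times> (UNIV :: bool set)"
        then obtain x b where z: "z = (x, b)" "x \<in> A" by auto
        then obtain i where i: "i < a" "f i = x" using fA by auto
        show "z \<in> (\<lambda>i. if i < a then (f i, False) else (f (i - a), True)) ` {0..<a + a}"
        proof (cases b)
          case True thus ?thesis using z i by (intro image_eqI[of _ _ "i + a"]) auto
        next
          case False thus ?thesis using z i by (intro image_eqI[of _ _ i]) auto
        qed
      qed
    qed
  qed
qed


lemma cart_mat:
  fixes s :: "'a \<Rightarrow> 'a \<Rightarrow> int"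
  assumes f: "bij_betw f {0..<N} I"
  shows "mat (N+N) (N+N) (\<lambda>(i,j). adj_matrix (cart_sign s K2_sign)
            ((\<lambda>i. if i < N then (f i, False) else (f (i - N), True)) i) ((\<lambda>i. if i < N then (f i, False) else (f (i - N), True)) j))
       = four_block_mat (mat N N (\<lambda>(i,j). adj_matrix s (f i) (f j))) (1\<^sub>m N) (1\<^sub>m N) (mat N N (\<lambda>(i,j). adj_matrix s (f i) (f j)))"
proof (rule eq_matI)
  have fi: "inj_on f {0..<N}" using f by (auto simp: bij_betw_def)
  have fe: "f x = f y \<longleftrightarrow> x = y" if "x < N" "y < N" for x y
    using inj_on_eq_iff[OF fi] that by auto
  fix i j assume i: "i < dim_row (four_block_mat (mat N N (\<lambda>(i,j). adj_matrix s (f i) (f j))) (1\<^sub>m N) (1\<^sub>m N) (mat N N (\<lambda>(i,j). adj_matrix s (f i) (f j))))"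
    and j: "j < dim_col (four_block_mat (mat N N (\<lambda>(i,j). adj_matrix s (f i) (f j))) (1\<^sub>m N) (1\<^sub>m N) (mat N N (\<lambda>(i,j). adj_matrix s (f i) (f j))))"
  hence i': "i < N + N" and j': "j < N + N" by auto
  show "mat (N+N) (N+N) (\<lambda>(i,j). adj_matrix (cart_sign s K2_sign)
            ((\<lambda>i. if i < N then (f i, False) else (f (i - N), True)) i) ((\<lambda>i. if i < N then (f i, False) else (f (i - N), True)) j)) $$ (i,j)
       = four_block_mat (mat N N (\<lambda>(i,j). adj_matrix s (f i) (f j))) (1\<^sub>m N) (1\<^sub>m N) (mat N N (\<lambda>(i,j). adj_matrix s (f i) (f j))) $$ (i,j)"
    using i' j' by (auto simp: adj_matrix_def cart_sign_def K2_sign_def fe)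
qed auto

lemma kron_mat:
  fixes s :: "'a \<Rightarrow> 'a \<Rightarrow> int"
  assumes f: "bij_betw f {0..<N} I"
  shows "mat (N+N) (N+N) (\<lambda>(i,j). adj_matrix (kron_sign s K2_sign)
            ((\<lambda>i. if i < N then (f i, False) else (f (i - N), True)) i) ((\<lambda>i. if i < N then (f i, False) else (f (i - N), True)) j))
       = four_block_mat (0\<^sub>m N N) (mat N N (\<lambda>(i,j). adj_matrix s (f i) (f j))) (mat N N (\<lambda>(i,j). adj_matrix s (f i) (f j))) (0\<^sub>m N N)"
  by (rule eq_matI) (auto simp: adj_matrix_def kron_sign_def K2_sign_def)

lemma charpoly_cart:
  fixes A :: "real mat"
  assumes A: "A \<in> carrier_mat N N"
  shows "char_poly (four_block_mat A (1\<^sub>m N) (1\<^sub>m N) A) = pcompose (char_poly A) [:1,1:] * pcompose (char_poly A) [:-1,1:]"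
proof -
  let ?C = "char_poly_matrix A"
  have C: "?C \<in> carrier_mat N N" using A by simp
  have m1: "(- 1\<^sub>m N :: real poly mat) \<in> carrier_mat N N" by simp
  have "char_poly_matrix (four_block_mat A (1\<^sub>m N) (1\<^sub>m N) A) = four_block_mat ?C (- 1\<^sub>m N) (- 1\<^sub>m N) ?C"
    by (rule eq_matI) (use A in \<open>auto simp: char_poly_matrix_def\<close>)
  hence "char_poly (four_block_mat A (1\<^sub>m N) (1\<^sub>m N) A) = det (?C - - 1\<^sub>m N) * det (?C + - 1\<^sub>m N)"
    unfolding char_poly_def using det_block_sym[OF C m1] by simp
  also have "?C - - 1\<^sub>m N = map_mat (\<lambda>p. pcompose p [:1,1:]) ?C"
    by (rule eq_matI) (use A in \<open>auto simp: char_poly_matrix_def pcompose_pCons\<close>)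
  also have "?C + - 1\<^sub>m N = map_mat (\<lambda>p. pcompose p [:-1,1:]) ?C"
    by (rule eq_matI) (use A in \<open>auto simp: char_poly_matrix_def pcompose_pCons\<close>)
  finally show ?thesis by (simp add: det_cpm_compose)
qed

lemma charpoly_kron:
  fixes A :: "real mat"
  assumes A: "A \<in> carrier_mat N N"
  shows "char_poly (four_block_mat (0\<^sub>m N N) A A (0\<^sub>m N N)) = ((-1)^N * pcompose (char_poly A) [:0,-1:]) * char_poly A"
proof -
  let ?C = "char_poly_matrix A"
  let ?X = "[:0,1:] \<cdot>\<^sub>m 1\<^sub>m N :: real poly mat"
  let ?B = "map_mat (\<lambda>a. [:- a:]) A"
  have B: "?B \<in> carrier_mat N N" using A by simp
  have X: "?X \<in> carrier_mat N N" by simp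
  have "char_poly_matrix (four_block_mat (0\<^sub>m N N) A A (0\<^sub>m N N)) = four_block_mat ?X ?B ?B ?X"
    by (rule eq_matI) (use A in \<open>auto simp: char_poly_matrix_def\<close>)
  hence "char_poly (four_block_mat (0\<^sub>m N N) A A (0\<^sub>m N N)) = det (?X - ?B) * det (?X + ?B)"
    unfolding char_poly_def using det_block_sym[OF X B] by simp
  also have "?X + ?B = ?C" unfolding char_poly_matrix_def using A by simp
  also have "?X - ?B = (-1) \<cdot>\<^sub>m map_mat (\<lambda>p. pcompose p [:0,-1:]) ?C"
    by (rule eq_matI) (use A in \<open>auto simp: char_poly_matrix_def pcompose_pCons\<close>)
  also have "det \<dots> = (-1)^N * pcompose (char_poly A) [:0,-1:]"
  proof -
    have "dim_col ?C = N" using char_poly_matrix_closed[OF A] by (simp add: carrier_matD)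
    thus ?thesis by (simp add: det_cpm_compose)
  qed
  finally show ?thesis unfolding char_poly_def .
qed


lemma S_charpoly:
  assumes sg: "signed_graph V s" and vs: "valid_subdiv_signs V s \<theta>"
    and fv: "bij_betw fv {0..<n} V" and fe: "bij_betw fe {0..<m} (sg_edges V s)"
  shows "char_poly (mat (n+m) (n+m) (\<lambda>(i,j). adj_matrix (subdiv_sign V s \<theta>)
            ((\<lambda>i. if i < n then Inl (fv i) else Inr (fe (i - n))) i) ((\<lambda>i. if i < n then Inl (fv i) else Inr (fe (i - n))) j))) * [:0,1:]^n
        = pcompose (char_poly (mat n n (\<lambda>(i,j). lap_matrix V s (fv i) (fv j)))) [:0,0,1:] * [:0,1:]^m"
proof -
  let ?E = "sg_edges V s"
  let ?h = "\<lambda>i. if i < n then Inl (fv i) else Inr (fe (i - n))"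
  define tt where "tt = (\<lambda>v e. real_of_int (if v \<in> e then \<theta> v e else 0))"
  define Bm where "Bm = mat n m (\<lambda>(i,j). tt (fv i) (fe j))"
  define Lm where "Lm = mat n n (\<lambda>(i,j). lap_matrix V s (fv i) (fv j))"
  let ?As = "mat (n+m) (n+m) (\<lambda>(i,j). adj_matrix (subdiv_sign V s \<theta>) (?h i) (?h j))"
  let ?B = "map_mat (\<lambda>a. [:- a:]) Bm"
  let ?C = "map_mat (\<lambda>a. [:- a:]) (transpose_mat Bm)"
  have feE: "fe j \<in> ?E" if "j < m" for j using fe that by (auto simp: bij_betw_def)
  have fvV: "fv i \<in> V" if "i < n" for i using fv that by (auto simp: bij_betw_def)
  have B: "?B \<in> carrier_mat n m" unfolding Bm_def by simp
  have C: "?C \<in> carrier_mat m n" unfolding Bm_def by simp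
  have cpm: "char_poly_matrix ?As = four_block_mat ([:0,1:] \<cdot>\<^sub>m 1\<^sub>m n) ?B ?C ([:0,1:] \<cdot>\<^sub>m 1\<^sub>m m)"
    by (rule eq_matI) (auto simp: char_poly_matrix_def Bm_def tt_def adj_matrix_def feE)
  have key: "[:0,0,1:] \<cdot>\<^sub>m 1\<^sub>m n - ?B * ?C = map_mat (\<lambda>p. pcompose p [:0,0,1:]) (char_poly_matrix Lm)"
  proof (rule eq_matI)
    fix i j assume "i < dim_row (map_mat (\<lambda>p. pcompose p [:0,0,1:]) (char_poly_matrix Lm))"
      "j < dim_col (map_mat (\<lambda>p. pcompose p [:0,0,1:]) (char_poly_matrix Lm))"
    hence i: "i < n" and j: "j < n" unfolding Lm_def char_poly_matrix_def by auto
    have "(?B * ?C) $$ (i,j) = (\<Sum>k\<in>{0..<m}. [:- tt (fv i) (fe k):] * [:- tt (fv j) (fe k):])"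
      using i j unfolding Bm_def by (simp add: scalar_prod_def)
    also have "\<dots> = [:\<Sum>k\<in>{0..<m}. tt (fv i) (fe k) * tt (fv j) (fe k):]"
      by (simp add: sum_to_poly[symmetric] mult.commute)
    also have "(\<Sum>k\<in>{0..<m}. tt (fv i) (fe k) * tt (fv j) (fe k)) = (\<Sum>e\<in>?E. tt (fv i) e * tt (fv j) e)"
      by (rule sum.reindex_bij_betw[OF fe])
    also have "\<dots> = lap_matrix V s (fv i) (fv j)"
      unfolding tt_def by (rule incidence[OF sg vs fvV[OF i] fvV[OF j]])
    finally have BC: "(?B * ?C) $$ (i,j) = [:lap_matrix V s (fv i) (fv j):]" .
    show "([:0,0,1:] \<cdot>\<^sub>m 1\<^sub>m n - ?B * ?C) $$ (i,j) = map_mat (\<lambda>p. pcompose p [:0,0,1:]) (char_poly_matrix Lm) $$ (i,j)"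
      using i j B C by (simp add: BC char_poly_matrix_def Lm_def pcompose_pCons)
  qed (use B C in \<open>auto simp: Lm_def char_poly_matrix_def\<close>)
  have "char_poly ?As * [:0,1:]^n = det ([:0,0,1:] \<cdot>\<^sub>m 1\<^sub>m n - ?B * ?C) * [:0,1:]^m"
    unfolding char_poly_def cpm by (rule det_block_XI[OF B C])
  also have "det ([:0,0,1:] \<cdot>\<^sub>m 1\<^sub>m n - ?B * ?C) = pcompose (char_poly Lm) [:0,0,1:]"
    unfolding key by (rule det_cpm_compose)
  finally show ?thesis unfolding Lm_def .
qed


theorem theorem4p10:
  fixes V :: "'a set" and s :: "'a \<Rightarrow> 'a \<Rightarrow> int" and \<theta> :: "'a \<Rightarrow> 'a set \<Rightarrow> int"
  assumes "signed_graph V s"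
    and "sg_edges V s \<noteq> {}"
    and "unicyclic V s"
    and "unbalanced V s"
    and "valid_subdiv_signs V s \<theta>"
    and "\<forall>\<mu>\<in>#lap_spectrum V s. \<mu> > 0"
  shows "(noncospectral
            (prod_vertices (subdiv_vertices V s) K2_vertices)
            (cart_sign (subdiv_sign V s \<theta>) K2_sign)
            (prod_vertices (subdiv_vertices V s) K2_vertices)
            (kron_sign (subdiv_sign V s \<theta>) K2_sign)
          \<and> equienergetic
            (prod_vertices (subdiv_vertices V s) K2_vertices)
            (cart_sign (subdiv_sign V s \<theta>) K2_sign)
            (prod_vertices (subdiv_vertices V s) K2_vertices)
            (kron_sign (subdiv_sign V s \<theta>) K2_sign))
         \<longleftrightarrow> (\<forall>\<mu>\<in>#lap_spectrum V s. \<mu> \<ge> 1)"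
proof -
  have fin: "finite V" and sym: "\<And>a b. s a b = s b a" and irr: "\<And>a. s a a = 0"
    and sup: "\<And>a b. s a b \<noteq> 0 \<Longrightarrow> a \<in> V \<and> b \<in> V" using assms(1) unfolding signed_graph_def by auto
  have GG: "GG V s" by (rule GG_I[OF fin sym irr sup])
  let ?E = "sg_edges V s"
  define n where "n = card V"
  define m where "m = card ?E"
  have finE: "finite ?E" by (rule finite_sg_edges[OF fin])
  have mn: "m \<le> n" unfolding m_def n_def by (rule unicyclic_edges_le[OF GG assms(3)])
  have Vne: "V \<noteq> {}" using assms(2) unfolding sg_edges_def by auto
  have npos: "n > 0" unfolding n_def using Vne fin by (simp add: card_gt_0_iff)
  obtain fv where fv: "bij_betw fv {0..<n} V" unfolding n_def using ex_bij_betw_nat_finite[OF fin] by blast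
  obtain fe where fe: "bij_betw fe {0..<m} ?E" unfolding m_def using ex_bij_betw_nat_finite[OF finE] by blast
  define h where "h = (\<lambda>i. if i < n then Inl (fv i) else Inr (fe (i - n)))"
  have hb: "bij_betw h {0..<n+m} (subdiv_vertices V s)"
    unfolding subdiv_vertices_def h_def by (rule bij_sum_idx[OF fv fe])
  define N where "N = n + m"
  have hbN: "bij_betw h {0..<N} (subdiv_vertices V s)" using hb unfolding N_def .
  have gb: "bij_betw (\<lambda>i. if i < N then (h i, False) else (h (i - N), True)) {0..<N+N} (prod_vertices (subdiv_vertices V s) K2_vertices)"
    unfolding prod_vertices_def K2_vertices_def by (rule bij_prod_idx[OF hbN])
  define Lm where "Lm = mat n n (\<lambda>(i,j). lap_matrix V s (fv i) (fv j))"
  define As where "As = mat N N (\<lambda>(i,j). adj_matrix (subdiv_sign V s \<theta>) (h i) (h j))"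
  define pL where "pL = char_poly Lm"
  define pS where "pS = char_poly As"
  have Lm: "Lm \<in> carrier_mat n n" unfolding Lm_def by simp
  have As: "As \<in> carrier_mat N N" unfolding As_def by simp
  have lapsp: "lap_spectrum V s = proots pL"
    unfolding lap_spectrum_def spectrum_on_def charpoly_on_char_poly[OF fv] pL_def Lm_def ..
  have pL0: "pL \<noteq> 0"
  proof
    assume "pL = 0"
    thus False using degree_monic_char_poly[OF Lm] unfolding pL_def by simp
  qed
  have pos: "\<forall>\<mu>\<in>#proots pL. \<mu> > 0" using assms(6) lapsp by simp
  have SX: "pS * [:0,1:]^n = pcompose pL [:0,0,1:] * [:0,1:]^m"
    using S_charpoly[OF assms(1) assms(5) fv fe] unfolding pS_def As_def h_def N_def pL_def Lm_def .
  have mneq: "m = n"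
  proof (rule ccontr)
    assume "m \<noteq> n"
    hence lt: "m < n" using mn by simp
    have "pS * [:0,1:]^(n - m) * [:0,1:]^m = pcompose pL [:0,0,1:] * [:0,1:]^m"
      using SX lt by (simp add: mult.assoc power_add[symmetric])
    hence "pS * [:0,1:]^(n - m) = pcompose pL [:0,0,1:]" by simp
    hence "poly (pcompose pL [:0,0,1:]) 0 = 0" using lt by (metis poly_mult poly_power poly_pCons mult_zero_right mult_zero_left zero_less_diff power_0_left add_0 poly_0 less_numeral_extra(3))
    hence "poly pL 0 = 0" by (simp add: poly_pcompose)
    hence "0 \<in># proots pL" using pL0 by simp
    thus False using pos by auto
  qed
  have pS: "pS = pcompose pL [:0,0,1:]" using SX mneq by simp
  have ne: "proots pL \<noteq> {#}"
  proof -
    have "\<exists>x. poly (char_poly Lm) x = 0"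
      by (rule sym_real_root[OF Lm npos]) (simp add: Lm_def lap_matrix_def sym)
    then obtain x where "poly pL x = 0" unfolding pL_def by blast
    hence "x \<in># proots pL" using pL0 by simp
    thus ?thesis by auto
  qed
  have cart: "adj_spectrum (prod_vertices (subdiv_vertices V s) K2_vertices) (cart_sign (subdiv_sign V s \<theta>) K2_sign)
      = proots (pcompose pS [:-1,1:] * pcompose pS [:1,1:])"
  proof -
    have "adj_spectrum (prod_vertices (subdiv_vertices V s) K2_vertices) (cart_sign (subdiv_sign V s \<theta>) K2_sign)
       = proots (char_poly (four_block_mat As (1\<^sub>m N) (1\<^sub>m N) As))"
      unfolding adj_spectrum_def spectrum_on_def charpoly_on_char_poly[OF gb] cart_mat[OF hbN] As_def ..
    also have "\<dots> = proots (pcompose pS [:-1,1:] * pcompose pS [:1,1:])"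
      unfolding charpoly_cart[OF As] pS_def by (simp add: mult.commute)
    finally show ?thesis .
  qed
  have kron: "adj_spectrum (prod_vertices (subdiv_vertices V s) K2_vertices) (kron_sign (subdiv_sign V s \<theta>) K2_sign)
      = proots (((-1)^N * pcompose pS [:0,-1:]) * pS)"
  proof -
    have "adj_spectrum (prod_vertices (subdiv_vertices V s) K2_vertices) (kron_sign (subdiv_sign V s \<theta>) K2_sign)
       = proots (char_poly (four_block_mat (0\<^sub>m N N) As As (0\<^sub>m N N)))"
      unfolding adj_spectrum_def spectrum_on_def charpoly_on_char_poly[OF gb] kron_mat[OF hbN] As_def ..
    also have "\<dots> = proots (((-1)^N * pcompose pS [:0,-1:]) * pS)"
      unfolding charpoly_kron[OF As] pS_def ..
    finally show ?thesis .
  qed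
  show ?thesis
    unfolding noncospectral_def equienergetic_def energy_def cart kron lapsp
    unfolding pS by (rule spectral_core[OF pL0 pos ne])
qed

end
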